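(* Let $a\in\mathcal A$. If area $a$'s decentralized DC-OPF problem has a feasible solution with $T_{a,(i,j)}=0$ for all $(i,j)\in\mathcal T_a$, then for each tieline $(i,j)\in\mathcal T_a$ there exists a critical price $\bar\mu_{(i,j)}>0$ such that whenever $\mu_{(i,j)}\ge\bar\mu_{(i,j)}$, the optimal solution of the decentralized DC-OPF problem has $T_{a,(i,j)}=0$.
   Context: Area $a$ of a multi-area power system has buses $\mathcal N_a$, internal lines $\mathcal F_a$ with reactances $x_{a,(i,j)}>0$ and limits $\overline F_{a,(i,j)}$, voltage angles $\theta_a$, known loads $D_a$, admittance matrix $B_a$, generators $\mathcal G_a$ with outputs $P_a$, limits $\underline P_a,\overline P_a$, incidence matrix $M_a$ and strictly convex cost functions $C_{a,g}$. Its tielines form the set $\mathcal T_a$ of pairs $(i,j)$ with $i$ a bus of $a$ and $j$ a bus of another area $a'$; flows $T_{a,(i,j)}$ (vector $T_a$, incidence matrix $R_a$), reactances $\bar x_{a,(i,j)}$, capacities $\bar T_{a,(i,j)}$. Given parameters $\alpha_{a',j}$, $\theta_{a',j}$ for each $(i,j)\in\mathcal T_a$ and capacity prices $\mu_{(i,j)}\ge 0$, the decentralized DC-OPF of area $a$ is: minimize $\sum_{g\in\mathcal G_a}C_{a,g}(P_{a,g})-\sum_{(i,j)\in\mathcal T_a}\alpha_{a',j}T_{a,(i,j)}+\sum_{(i,j)\in\mathcal T_a}\frac{\mu_{(i,j)}}{2}(|T_{a,(i,j)}|-\bar T_{a,(i,j)})$ over $P_a,\theta_a,T_a$ subject to $B_a\theta_a+R_aT_a=M_aP_a-D_a$,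 $\underline P_a\le P_a\le\overline P_a$, $-\overline F_{a,(i,j)}\le(\theta_{a,i}-\theta_{a,j})/x_{a,(i,j)}\le\overline F_{a,(i,j)}$ for $(i,j)\in\mathcal F_a$, $T_{a,(i,j)}=(\theta_{a,i}-\theta_{a',j})/\bar x_{a,(i,j)}$ for $(i,j)\in\mathcal T_a$, and $\theta_{a,1}=0$ if $a=1$. *)

theory Defs
  imports "HOL-Analysis.Analysis"
begin

definition strictly_convex_on :: "real set \<Rightarrow> (real \<Rightarrow> real) \<Rightarrow> bool" where
  "strictly_convex_on S f \<longleftrightarrow>
     (\<forall>x\<in>S. \<forall>y\<in>S. x \<noteq> y \<longrightarrow> (\<forall>u::real. 0 < u \<and> u < 1 \<longrightarrow>
        f (u * x + (1 - u) * y) < u * f x + (1 - u) * f y))"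

text \<open>Buses are of type 'b
  (global bus names, so external buses j of tielines have the same type),
  generators of type 'g.\<close>
record ('b, 'g) area =
  buses :: "'b set"
  lines :: "('b \<times> 'b) set"
  react :: "'b \<times> 'b \<Rightarrow> real"
  flim :: "'b \<times> 'b \<Rightarrow> real"
  load :: "'b \<Rightarrow> real"
  gens :: "'g set"
  gbus :: "'g \<Rightarrow> 'b"                    (* bus of generator, encodes M_a *)
  pmin :: "'g \<Rightarrow> real"
  pmax :: "'g \<Rightarrow> real"
  cost :: "'g \<Rightarrow> real \<Rightarrow> real"
  ties :: "('b \<times> 'b) set"
  tie_react :: "'b \<times> 'b \<Rightarrow> real"
  tie_cap :: "'b \<times> 'b \<Rightarrow> real"
  is_area1 :: bool
  bus1 :: 'b                            (* bus 1 of area a (reference bus) *)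

definition well_formed :: "('b, 'g) area \<Rightarrow> bool" where
  "well_formed A \<longleftrightarrow>
     finite (buses A) \<and> finite (lines A) \<and> finite (gens A) \<and> finite (ties A) \<and>
     lines A \<subseteq> buses A \<times> buses A \<and> (\<forall>(i,j)\<in>lines A. i \<noteq> j) \<and>
     (\<forall>l\<in>lines A. react A l > 0) \<and>
     (\<forall>g\<in>gens A. gbus A g \<in> buses A) \<and>
     (\<forall>(i,j)\<in>ties A. i \<in> buses A \<and> j \<notin> buses A) \<and>
     (\<forall>l\<in>ties A. tie_react A l > 0) \<and>
     (\<forall>g\<in>gens A. strictly_convex_on UNIV (cost A g)) \<and>
     bus1 A \<in> buses A"

definition admittance :: "('b, 'g) area \<Rightarrow> 'b \<Rightarrow> 'b \<Rightarrow> real" where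
  "admittance A n m =
     (if n = m then (\<Sum>l\<in>{l\<in>lines A. fst l = n \<or> snd l = n}. 1 / react A l)
      else - (\<Sum>l\<in>{l\<in>lines A. l = (n, m) \<or> l = (m, n)}. 1 / react A l))"

text \<open>Feasibility for the decentralized DC-OPF of area A, given the external
  angles thext j = theta_{a',j}.\<close>
definition feasible ::
  "('b, 'g) area \<Rightarrow> ('b \<Rightarrow> real) \<Rightarrow> ('g \<Rightarrow> real) \<Rightarrow> ('b \<Rightarrow> real) \<Rightarrow> ('b \<times> 'b \<Rightarrow> real) \<Rightarrow> bool" where
  "feasible A thext P \<theta> T \<longleftrightarrow>
     (\<forall>n\<in>buses A.
        (\<Sum>m\<in>buses A. admittance A n m * \<theta> m) + (\<Sum>l\<in>{l\<in>ties A. fst l = n}. T l)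
        = (\<Sum>g\<in>{g\<in>gens A. gbus A g = n}. P g) - load A n) \<and>
     (\<forall>g\<in>gens A. pmin A g \<le> P g \<and> P g \<le> pmax A g) \<and>
     (\<forall>(i,j)\<in>lines A. - flim A (i,j) \<le> (\<theta> i - \<theta> j) / react A (i,j) \<and>
                        (\<theta> i - \<theta> j) / react A (i,j) \<le> flim A (i,j)) \<and>
     (\<forall>(i,j)\<in>ties A. T (i,j) = (\<theta> i - thext j) / tie_react A (i,j)) \<and>
     (is_area1 A \<longrightarrow> \<theta> (bus1 A) = 0)"

definition objective ::
  "('b, 'g) area \<Rightarrow> ('b \<Rightarrow> real) \<Rightarrow> ('b \<times> 'b \<Rightarrow> real) \<Rightarrow> ('g \<Rightarrow> real) \<Rightarrow> ('b \<times> 'b \<Rightarrow> real) \<Rightarrow> real" where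
  "objective A alpha mu P T =
     (\<Sum>g\<in>gens A. cost A g (P g))
     - (\<Sum>(i,j)\<in>ties A. alpha j * T (i,j))
     + (\<Sum>l\<in>ties A. mu l / 2 * (\<bar>T l\<bar> - tie_cap A l))"

definition optimal ::
  "('b, 'g) area \<Rightarrow> ('b \<Rightarrow> real) \<Rightarrow> ('b \<Rightarrow> real) \<Rightarrow> ('b \<times> 'b \<Rightarrow> real) \<Rightarrow>
   ('g \<Rightarrow> real) \<Rightarrow> ('b \<Rightarrow> real) \<Rightarrow> ('b \<times> 'b \<Rightarrow> real) \<Rightarrow> bool" where
  "optimal A alpha thext mu P \<theta> T \<longleftrightarrow>
     feasible A thext P \<theta> T \<and>
     (\<forall>P' \<theta>' T'. feasible A thext P' \<theta>' T' \<longrightarrow>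
        objective A alpha mu P T \<le> objective A alpha mu P' T')"

end

theory Submission
  imports Defs
begin

definition affS :: "'i set \<Rightarrow> (('i \<Rightarrow> real) \<Rightarrow> real) \<Rightarrow> bool" where
  "affS S f \<longleftrightarrow> (\<exists>a b. \<forall>x. f x = (\<Sum>j\<in>S. a j * x j) + b)"

lemma affS_const: "affS S (\<lambda>x. c)"
  unfolding affS_def by (rule exI[of _ "\<lambda>_. 0"], rule exI[of _ c]) simp

lemma affS_coord:
  assumes "finite S" "k \<in> S"
  shows "affS S (\<lambda>x. x k)"
  unfolding affS_def
proof (intro exI allI)
  fix x :: "'a \<Rightarrow> real"
  show "x k = (\<Sum>j\<in>S. (if j = k then 1 else 0) * x j) + 0"
  proof -
    have "(\<Sum>j\<in>S. (if j = k then 1 else 0) * x j) = (\<Sum>j\<in>S. if j = k then x j else 0)"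
      by (rule sum.cong) auto
    then show ?thesis using assms by simp
  qed
qed

lemma affS_add:
  assumes "affS S f" "affS S g"
  shows "affS S (\<lambda>x. f x + g x)"
proof -
  obtain a b where ab: "\<forall>x. f x = (\<Sum>j\<in>S. a j * x j) + b" using assms(1) unfolding affS_def by blast
  obtain c d where cd: "\<forall>x. g x = (\<Sum>j\<in>S. c j * x j) + d" using assms(2) unfolding affS_def by blast
  show ?thesis unfolding affS_def
    by (rule exI[of _ "\<lambda>j. a j + c j"], rule exI[of _ "b + d"])
       (simp add: ab cd distrib_right sum.distrib)
qed

lemma affS_scale:
  assumes "affS S f"
  shows "affS S (\<lambda>x. c * f x)"
proof -
  obtain a b where ab: "\<forall>x. f x = (\<Sum>j\<in>S. a j * x j) + b" using assms(1) unfolding affS_def by blast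
  show ?thesis unfolding affS_def
    by (rule exI[of _ "\<lambda>j. c * a j"], rule exI[of _ "c * b"])
       (simp add: ab distrib_left sum_distrib_left mult.assoc)
qed

lemma affS_diff:
  assumes "affS S f" "affS S g"
  shows "affS S (\<lambda>x. f x - g x)"
  using affS_add[OF assms(1) affS_scale[OF assms(2), of "-1"]] by simp

lemma affS_div:
  assumes "affS S f"
  shows "affS S (\<lambda>x. f x / c)"
  using affS_scale[OF assms, of "1/c"] by simp

lemma affS_sum:
  assumes "finite I" "\<forall>i\<in>I. affS S (f i)"
  shows "affS S (\<lambda>x. \<Sum>i\<in>I. f i x)"
  using assms
proof (induction I rule: finite_induct)
  case empty
  then show ?case using affS_const[of S 0] by simp
next
  case (insert i I)
  then show ?case using affS_add[of S "f i" "\<lambda>x. \<Sum>i\<in>I. f i x"] by simp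
qed

lemma affS_eq:
  assumes "affS S f" "\<forall>j\<in>S. x j = y j"
  shows "f x = f y"
proof -
  obtain a b where ab: "\<forall>x. f x = (\<Sum>j\<in>S. a j * x j) + b" using assms(1) unfolding affS_def by blast
  have "(\<Sum>j\<in>S. a j * x j) = (\<Sum>j\<in>S. a j * y j)" using assms(2) by (intro sum.cong) auto
  then show ?thesis using ab by simp
qed

lemma hoffman:
  assumes "finite S"
  shows "finite cs \<Longrightarrow> (\<forall>f\<in>cs. affS S f) \<Longrightarrow> (\<exists>y. \<forall>f\<in>cs. f y \<le> 0) \<Longrightarrow>
    \<exists>C\<ge>0. \<forall>x \<epsilon>. \<epsilon> \<ge> 0 \<longrightarrow> (\<forall>f\<in>cs. f x \<le> \<epsilon>) \<longrightarrow>
       (\<exists>y. (\<forall>f\<in>cs. f y \<le> 0) \<and> (\<forall>j\<in>S. \<bar>x j - y j\<bar> \<le> C * \<epsilon>))"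
  using assms
proof (induction S arbitrary: cs rule: finite_induct)
  case empty
  show ?case
  proof (intro exI[of _ 0] conjI allI impI)
    fix x :: "'a \<Rightarrow> real" and \<epsilon> :: real
    obtain y0 where y0: "\<forall>f\<in>cs. f y0 \<le> 0" using empty by blast
    have "\<forall>f\<in>cs. f x = f y0"
    proof
      fix f assume "f \<in> cs"
      then show "f x = f y0" using affS_eq[of "{}" f x y0] empty.prems(2) by auto
    qed
    then show "\<exists>y. (\<forall>f\<in>cs. f y \<le> 0) \<and> (\<forall>j\<in>{}. \<bar>x j - y j\<bar> \<le> 0 * \<epsilon>)"
      using y0 by (intro exI[of _ x]) auto
  qed simp
next
  case (insert k S)
  have "\<forall>f\<in>cs. \<exists>ab. \<forall>x. f x = (\<Sum>j\<in>insert k S. fst ab j * x j) + snd ab"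
    using insert.prems(2) unfolding affS_def by auto
  then obtain AB where AB: "\<forall>f\<in>cs. \<forall>x. f x = (\<Sum>j\<in>insert k S. fst (AB f) j * x j) + snd (AB f)"
    by (rule bchoice[THEN exE]) blast
  define A where "A f = fst (AB f)" for f
  define B where "B f = snd (AB f)" for f
  define rest where "rest f x = (\<Sum>j\<in>S. A f j * x j) + B f" for f x
  define ak where "ak f = A f k" for f
  have fdec: "f x = rest f x + ak f * x k" if "f \<in> cs" for f x
    using AB that insert(1,2) unfolding rest_def ak_def A_def B_def by (simp add: algebra_simps)
  have rest_aff: "affS S (rest f)" for f
    unfolding affS_def rest_def by blast
  define U where "U = {f\<in>cs. ak f > 0}"
  define Lo where "Lo = {f\<in>cs. ak f < 0}"
  define Z where "Z = {f\<in>cs. ak f = 0}"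
  define fm where "fm f g = (\<lambda>x. rest f x / ak f - rest g x / ak g)" for f g
  define cs' where "cs' = rest ` Z \<union> (\<lambda>(f,g). fm f g) ` (U \<times> Lo)"
  have finU: "finite U" and finLo: "finite Lo" and finZ: "finite Z"
    using insert.prems(1) unfolding U_def Lo_def Z_def by auto
  have fin': "finite cs'" unfolding cs'_def using finU finLo finZ by auto
  have aff': "\<forall>h\<in>cs'. affS S h"
    unfolding cs'_def fm_def using rest_aff affS_diff affS_div by fastforce
  obtain y0 where y0: "\<forall>f\<in>cs. f y0 \<le> 0" using insert.prems(3) by blast
  have feas': "\<exists>y. \<forall>h\<in>cs'. h y \<le> 0"
  proof (intro exI ballI)
    fix h assume "h \<in> cs'"
    then consider f where "f \<in> Z" "h = rest f" | f g where "f \<in> U" "g \<in> Lo" "h = fm f g"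
      unfolding cs'_def by auto
    then show "h y0 \<le> 0"
    proof cases
      case 1
      then show ?thesis using y0 fdec[of f y0] unfolding Z_def by auto
    next
      case 2
      have f1: "rest f y0 + ak f * y0 k \<le> 0" using y0 fdec 2 unfolding U_def by force
      have f2: "rest g y0 + ak g * y0 k \<le> 0" using y0 fdec 2 unfolding Lo_def by force
      have a1: "ak f > 0" and a2: "ak g < 0" using 2 unfolding U_def Lo_def by auto
      have "rest f y0 / ak f \<le> - y0 k" using f1 a1 by (simp add: divide_le_eq algebra_simps)
      moreover have "rest g y0 / ak g \<ge> - y0 k" using f2 a2 by (simp add: le_divide_eq algebra_simps)
      ultimately show ?thesis unfolding 2 fm_def by simp
    qed
  qed
  obtain C' where C'0: "C' \<ge> 0" and C': "\<forall>x \<epsilon>. \<epsilon> \<ge> 0 \<longrightarrow> (\<forall>h\<in>cs'. h x \<le> \<epsilon>) \<longrightarrow>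
       (\<exists>y. (\<forall>h\<in>cs'. h y \<le> 0) \<and> (\<forall>j\<in>S. \<bar>x j - y j\<bar> \<le> C' * \<epsilon>))"
    using insert.IH[OF fin' aff' feas'] by blast
  define S1 where "S1 = (\<Sum>f\<in>cs. if ak f = 0 then 0 else 1 / \<bar>ak f\<bar>)"
  define M where "M = 1 + 2 * S1"
  define K where "K = (\<Sum>f\<in>cs. if ak f = 0 then 0 else (1 + (\<Sum>j\<in>S. \<bar>A f j\<bar>) * C' * M) / \<bar>ak f\<bar>)"
  have S10: "S1 \<ge> 0" unfolding S1_def by (rule sum_nonneg) auto
  have M1: "M \<ge> 1" unfolding M_def using S10 by simp
  have S1ge: "1 / \<bar>ak f\<bar> \<le> S1" if "f \<in> cs" "ak f \<noteq> 0" for f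
  proof -
    have "(if ak f = 0 then 0 else 1 / \<bar>ak f\<bar>) \<le> S1"
      unfolding S1_def by (rule member_le_sum) (use that insert.prems(1) in auto)
    then show ?thesis using that by simp
  qed
  have K0: "K \<ge> 0" unfolding K_def using C'0 M1 by (intro sum_nonneg) auto
  have Kge: "(1 + (\<Sum>j\<in>S. \<bar>A f j\<bar>) * C' * M) / \<bar>ak f\<bar> \<le> K" if "f \<in> cs" "ak f \<noteq> 0" for f
  proof -
    have "(if ak f = 0 then 0 else (1 + (\<Sum>j\<in>S. \<bar>A f j\<bar>) * C' * M) / \<bar>ak f\<bar>) \<le> K"
      unfolding K_def by (rule member_le_sum) (use that insert.prems(1) C'0 M1 in auto)
    then show ?thesis using that by simp
  qed
  show ?case
  proof (intro exI[of _ "C' * M + K"] conjI allI impI)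
    show "C' * M + K \<ge> 0" using C'0 M1 K0 by simp
    fix x :: "'a \<Rightarrow> real" and \<epsilon> :: real
    assume e0: "\<epsilon> \<ge> 0" and xv: "\<forall>f\<in>cs. f x \<le> \<epsilon>"
    have xv': "\<forall>h\<in>cs'. h x \<le> M * \<epsilon>"
    proof
      fix h assume "h \<in> cs'"
      then consider f where "f \<in> Z" "h = rest f" | f g where "f \<in> U" "g \<in> Lo" "h = fm f g"
        unfolding cs'_def by auto
      then show "h x \<le> M * \<epsilon>"
      proof cases
        case 1
        then have "h x \<le> \<epsilon>" using xv fdec[of f x] unfolding Z_def by auto
        also have "\<epsilon> \<le> M * \<epsilon>" using M1 e0 by (simp add: mult_le_cancel_right1)
        finally show ?thesis .
      next
        case 2
        have fc: "f \<in> cs" "g \<in> cs" using 2 unfolding U_def Lo_def by auto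
        have f1: "rest f x + ak f * x k \<le> \<epsilon>" using xv fdec fc by force
        have f2: "rest g x + ak g * x k \<le> \<epsilon>" using xv fdec fc by force
        have a1: "ak f > 0" and a2: "ak g < 0" using 2 unfolding U_def Lo_def by auto
        have "rest f x \<le> \<epsilon> - ak f * x k" using f1 by linarith
        then have "rest f x / ak f \<le> (\<epsilon> - ak f * x k) / ak f" using a1 by (simp add: divide_right_mono)
        also have "\<dots> = \<epsilon> / ak f - x k" using a1 by (simp add: diff_divide_distrib)
        finally have q1: "rest f x / ak f \<le> \<epsilon> / ak f - x k" .
        have "rest g x \<le> \<epsilon> - ak g * x k" using f2 by linarith
        then have "rest g x / ak g \<ge> (\<epsilon> - ak g * x k) / ak g" using a2 by (simp add: divide_right_mono_neg)
        moreover have "(\<epsilon> - ak g * x k) / ak g = \<epsilon> / ak g - x k" using a2 by (simp add: diff_divide_distrib)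
        ultimately have q2: "rest g x / ak g \<ge> \<epsilon> / ak g - x k" by simp
        have "h x \<le> \<epsilon> / ak f - \<epsilon> / ak g" unfolding 2 fm_def using q1 q2 by linarith
        also have "\<dots> = \<epsilon> * (1 / \<bar>ak f\<bar> + 1 / \<bar>ak g\<bar>)"
          using a1 a2 by (simp add: abs_of_pos abs_of_neg right_diff_distrib)
        also have "\<dots> \<le> \<epsilon> * M"
          using S1ge[of f] S1ge[of g] fc a1 a2 e0 unfolding M_def by (intro mult_left_mono) auto
        finally show ?thesis by (simp add: mult.commute)
      qed
    qed
    obtain z where zf: "\<forall>h\<in>cs'. h z \<le> 0" and zd: "\<forall>j\<in>S. \<bar>x j - z j\<bar> \<le> C' * (M * \<epsilon>)"
    proof -
      have Me: "M * \<epsilon> \<ge> 0" using M1 e0 by simp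
      from C' Me xv' have "\<exists>y. (\<forall>h\<in>cs'. h y \<le> 0) \<and> (\<forall>j\<in>S. \<bar>x j - y j\<bar> \<le> C' * (M * \<epsilon>))"
        by blast
      then show ?thesis using that by blast
    qed
    have restd: "\<bar>rest f z - rest f x\<bar> \<le> (\<Sum>j\<in>S. \<bar>A f j\<bar>) * (C' * (M * \<epsilon>))" for f
    proof -
      have "rest f z - rest f x = (\<Sum>j\<in>S. A f j * (z j - x j))"
        unfolding rest_def by (simp add: sum_subtractf algebra_simps)
      then have "\<bar>rest f z - rest f x\<bar> \<le> (\<Sum>j\<in>S. \<bar>A f j * (z j - x j)\<bar>)"
        by (simp add: sum_abs)
      also have "\<dots> \<le> (\<Sum>j\<in>S. \<bar>A f j\<bar> * (C' * (M * \<epsilon>)))"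
        using zd by (intro sum_mono) (auto simp: abs_mult abs_minus_commute intro: mult_left_mono)
      finally show ?thesis by (simp add: sum_distrib_right)
    qed
    define s where "s = x k"
    define lo where "lo g = - rest g z / ak g" for g
    define up where "up f = - rest f z / ak f" for f
    define t where "t = Min (insert (Max (insert s (lo ` Lo))) (up ` U))"
    have lo_le: "lo g \<le> s + K * \<epsilon>" if g: "g \<in> Lo" for g
    proof -
      have gc: "g \<in> cs" and a: "ak g < 0" using g unfolding Lo_def by auto
      have f2: "rest g x + ak g * s \<le> \<epsilon>" using xv fdec gc unfolding s_def by force
      define R where "R = (\<Sum>j\<in>S. \<bar>A g j\<bar>) * (C' * (M * \<epsilon>))"
      have "rest g z \<le> \<epsilon> - ak g * s + R" using restd[of g] f2 unfolding R_def by linarith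
      then have "lo g \<le> s + (\<epsilon> + R) / \<bar>ak g\<bar>"
        unfolding lo_def using a by (simp add: field_simps)
      also have "(\<epsilon> + R) / \<bar>ak g\<bar> = \<epsilon> * ((1 + (\<Sum>j\<in>S. \<bar>A g j\<bar>) * C' * M) / \<bar>ak g\<bar>)"
        unfolding R_def by (simp add: field_simps)
      also have "\<dots> \<le> \<epsilon> * K" using Kge[OF gc] a e0 by (intro mult_left_mono) auto
      finally show ?thesis by (simp add: mult.commute)
    qed
    have up_ge: "up f \<ge> s - K * \<epsilon>" if f: "f \<in> U" for f
    proof -
      have fc: "f \<in> cs" and a: "ak f > 0" using f unfolding U_def by auto
      have f1: "rest f x + ak f * s \<le> \<epsilon>" using xv fdec fc unfolding s_def by force
      define R where "R = (\<Sum>j\<in>S. \<bar>A f j\<bar>) * (C' * (M * \<epsilon>))"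
      have "rest f z \<le> \<epsilon> - ak f * s + R" using restd[of f] f1 unfolding R_def by linarith
      then have "- rest f z \<ge> ak f * s - (\<epsilon> + R)" by linarith
      then have "(ak f * s - (\<epsilon> + R)) / ak f \<le> - rest f z / ak f"
        using a by (intro divide_right_mono) auto
      moreover have "(ak f * s - (\<epsilon> + R)) / ak f = s - (\<epsilon> + R) / \<bar>ak f\<bar>"
        using a by (simp add: diff_divide_distrib)
      ultimately have "up f \<ge> s - (\<epsilon> + R) / \<bar>ak f\<bar>" unfolding up_def by simp
      moreover have "(\<epsilon> + R) / \<bar>ak f\<bar> = \<epsilon> * ((1 + (\<Sum>j\<in>S. \<bar>A f j\<bar>) * C' * M) / \<bar>ak f\<bar>)"
        unfolding R_def by (simp add: field_simps)
      moreover have "\<epsilon> * ((1 + (\<Sum>j\<in>S. \<bar>A f j\<bar>) * C' * M) / \<bar>ak f\<bar>) \<le> \<epsilon> * K"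
        using Kge[OF fc] a e0 by (intro mult_left_mono) auto
      ultimately show ?thesis by (simp add: mult.commute)
    qed
    have lo_up: "lo g \<le> up f" if "f \<in> U" "g \<in> Lo" for f g
    proof -
      have "fm f g z \<le> 0" using zf that unfolding cs'_def by auto
      then show ?thesis unfolding fm_def lo_def up_def by simp
    qed
    have finset: "finite (insert (Max (insert s (lo ` Lo))) (up ` U))" using finU by simp
    have t_up: "t \<le> up f" if "f \<in> U" for f
      unfolding t_def using finset that by (intro Min_le) auto
    have t_lo: "lo g \<le> t" if g: "g \<in> Lo" for g
    proof -
      have "t \<in> insert (Max (insert s (lo ` Lo))) (up ` U)"
        unfolding t_def using finset by (intro Min_in) auto
      then show ?thesis
      proof
        assume "t = Max (insert s (lo ` Lo))"
        then show ?thesis using finLo g by (simp add: Max_ge_iff)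
      next
        assume "t \<in> up ` U"
        then show ?thesis using lo_up g by auto
      qed
    qed
    have t_hi: "t \<le> s + K * \<epsilon>"
    proof -
      have "t \<le> Max (insert s (lo ` Lo))" unfolding t_def using finset by (intro Min_le) auto
      also have "\<dots> \<le> s + K * \<epsilon>" using finLo lo_le K0 e0 by (simp add: Max_le_iff)
      finally show ?thesis .
    qed
    have t_low: "s - K * \<epsilon> \<le> t"
    proof -
      have "t \<in> insert (Max (insert s (lo ` Lo))) (up ` U)"
        unfolding t_def using finset by (intro Min_in) auto
      then show ?thesis
      proof
        assume "t = Max (insert s (lo ` Lo))"
        moreover have "s \<le> Max (insert s (lo ` Lo))" using finLo by simp
        ultimately show ?thesis using K0 e0 by (smt (verit) mult_nonneg_nonneg)
      next
        assume "t \<in> up ` U"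
        then show ?thesis using up_ge by auto
      qed
    qed
    define y where "y = z(k := t)"
    have resty: "rest f y = rest f z" for f
      using affS_eq[OF rest_aff[of f], of y z] insert(2) unfolding y_def by auto
    show "\<exists>y. (\<forall>f\<in>cs. f y \<le> 0) \<and> (\<forall>j\<in>insert k S. \<bar>x j - y j\<bar> \<le> (C' * M + K) * \<epsilon>)"
    proof (intro exI[of _ y] conjI ballI)
      fix f assume fc: "f \<in> cs"
      have fy: "f y = rest f z + ak f * t" using fdec[OF fc, of y] resty unfolding y_def by simp
      consider "ak f = 0" | "ak f > 0" | "ak f < 0" by linarith
      then show "f y \<le> 0"
      proof cases
        case 1
        then have "f \<in> Z" using fc unfolding Z_def by auto
        then have "rest f z \<le> 0" using zf unfolding cs'_def by auto
        then show ?thesis using fy 1 by simp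
      next
        case 2
        then have "f \<in> U" using fc unfolding U_def by auto
        then have "t \<le> up f" by (rule t_up)
        then have "ak f * t \<le> ak f * up f" using 2 by (simp add: mult_left_mono)
        then show ?thesis using fy 2 unfolding up_def by simp
      next
        case 3
        then have "f \<in> Lo" using fc unfolding Lo_def by auto
        then have "lo f \<le> t" by (rule t_lo)
        then have "ak f * t \<le> ak f * lo f" using 3 by (simp add: mult_left_mono_neg)
        then show ?thesis using fy 3 unfolding lo_def by simp
      qed
    next
      fix j assume j: "j \<in> insert k S"
      have p1: "C' * M * \<epsilon> \<ge> 0" using C'0 M1 e0 by simp
      have p2: "K * \<epsilon> \<ge> 0" using K0 e0 by simp
      show "\<bar>x j - y j\<bar> \<le> (C' * M + K) * \<epsilon>"
      proof (cases "j = k")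
        case True
        then have "\<bar>x j - y j\<bar> \<le> K * \<epsilon>" using t_hi t_low unfolding y_def s_def by auto
        then show ?thesis using p1 by (simp add: distrib_right)
      next
        case False
        then have "j \<in> S" using j by auto
        then have "\<bar>x j - y j\<bar> \<le> C' * M * \<epsilon>" using zd False unfolding y_def by (simp add: mult.assoc)
        then show ?thesis using p2 by (simp add: distrib_right)
      qed
    qed
  qed
qed


lemma strict_imp_convex:
  assumes "strictly_convex_on UNIV f"
  shows "convex_on UNIV f"
  unfolding convex_on_def
proof (intro conjI ballI allI impI)
  fix x y u v :: real
  assume u: "u \<ge> 0" and v: "v \<ge> 0" and uv: "u + v = 1"
  show "f (u *\<^sub>R x + v *\<^sub>R y) \<le> u * f x + v * f y"
  proof (cases "x = y \<or> u = 0 \<or> v = 0")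
    case True
    then show ?thesis
    proof (elim disjE)
      assume "x = y"
      then have "u *\<^sub>R x + v *\<^sub>R y = x" "u * f x + v * f y = f x"
        using uv by (simp_all add: distrib_right[symmetric])
      then show ?thesis by simp
    qed (use uv in auto)
  next
    case False
    then have "0 < u" "u < 1" "v = 1 - u" using u v uv by auto
    moreover have "f (u * x + (1 - u) * y) < u * f x + (1 - u) * f y"
      using assms False \<open>0 < u\<close> \<open>u < 1\<close> unfolding strictly_convex_on_def by auto
    ultimately show ?thesis by simp
  qed
qed simp

lemma convex_lip:
  assumes sc: "strictly_convex_on UNIV f"
    and "lo \<le> u" "u \<le> hi" "lo \<le> v" "v \<le> hi"
  shows "f v - f u \<le> (\<bar>f (hi + 1) - f hi\<bar> + \<bar>f lo - f (lo - 1)\<bar>) * \<bar>v - u\<bar>"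
proof -
  have cv: "convex_on UNIV f" using strict_imp_convex[OF sc] .
  consider "u = v" | "u < v" | "v < u" by linarith
  then show ?thesis
  proof cases
    case 1
    then show ?thesis by simp
  next
    case 2
    have s1: "(f u - f v) / (u - v) \<le> (f u - f (hi + 1)) / (u - (hi + 1))"
      using convex_on_slope_le(1)[OF cv, of u "hi + 1" v] 2 assms by auto
    have s2: "(f u - f (hi + 1)) / (u - (hi + 1)) \<le> (f hi - f (hi + 1)) / (hi - (hi + 1))"
    proof (cases "u < hi")
      case True
      then show ?thesis using convex_on_slope_le(2)[OF cv, of u "hi + 1" hi] by auto
    next
      case False
      then show ?thesis using 2 assms by auto
    qed
    have "(f v - f u) / (v - u) \<le> f (hi + 1) - f hi"
    proof -
      have e1: "(f u - f v) / (u - v) = (f v - f u) / (v - u)" by (metis minus_diff_eq minus_divide_divide)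
      have e2: "(f hi - f (hi + 1)) / (hi - (hi + 1)) = f (hi + 1) - f hi" by simp
      show ?thesis using s1 s2 e1 e2 by linarith
    qed
    then have "f v - f u \<le> (f (hi + 1) - f hi) * (v - u)"
      using 2 by (simp add: divide_le_eq)
    also have "\<dots> \<le> (\<bar>f (hi + 1) - f hi\<bar> + \<bar>f lo - f (lo - 1)\<bar>) * \<bar>v - u\<bar>"
      using 2 by (intro mult_mono) auto
    finally show ?thesis .
  next
    case 3
    have s1: "(f (lo - 1) - f u) / ((lo - 1) - u) \<le> (f v - f u) / (v - u)"
      using convex_on_slope_le(2)[OF cv, of "lo - 1" u v] 3 assms by auto
    have s2: "(f (lo - 1) - f lo) / ((lo - 1) - lo) \<le> (f (lo - 1) - f u) / ((lo - 1) - u)"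
    proof (cases "lo < u")
      case True
      then show ?thesis using convex_on_slope_le(1)[OF cv, of "lo - 1" u lo] by auto
    next
      case False
      then show ?thesis using 3 assms by auto
    qed
    have "f lo - f (lo - 1) \<le> (f u - f v) / (u - v)"
    proof -
      have e1: "(f u - f v) / (u - v) = (f v - f u) / (v - u)" by (metis minus_diff_eq minus_divide_divide)
      have e2: "(f (lo - 1) - f lo) / ((lo - 1) - lo) = f lo - f (lo - 1)" by simp
      show ?thesis using s1 s2 e1 e2 by linarith
    qed
    then have "(f lo - f (lo - 1)) * (u - v) \<le> f u - f v"
      using 3 by (simp add: le_divide_eq)
    then have "f v - f u \<le> - (f lo - f (lo - 1)) * (u - v)" by (simp add: algebra_simps)
    also have "\<dots> \<le> (\<bar>f (hi + 1) - f hi\<bar> + \<bar>f lo - f (lo - 1)\<bar>) * \<bar>v - u\<bar>"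
      using 3 by (intro mult_mono) auto
    finally show ?thesis .
  qed
qed


definition balx :: "('b, 'g) area \<Rightarrow> ('b \<Rightarrow> real) \<Rightarrow> 'b \<Rightarrow> ('g + 'b \<Rightarrow> real) \<Rightarrow> real" where
  "balx A thext n x = (\<Sum>m\<in>buses A. admittance A n m * x (Inr m))
     + (\<Sum>l\<in>{l\<in>ties A. fst l = n}. (x (Inr (fst l)) - thext (snd l)) / tie_react A l)
     - (\<Sum>g\<in>{g\<in>gens A. gbus A g = n}. x (Inl g)) + load A n"

definition Tx :: "('b, 'g) area \<Rightarrow> ('b \<Rightarrow> real) \<Rightarrow> ('g + 'b \<Rightarrow> real) \<Rightarrow> 'b \<times> 'b \<Rightarrow> real" where
  "Tx A thext x l = (x (Inr (fst l)) - thext (snd l)) / tie_react A l"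

definition csf :: "('b, 'g) area \<Rightarrow> ('b \<Rightarrow> real) \<Rightarrow> (('g + 'b \<Rightarrow> real) \<Rightarrow> real) set" where
  "csf A thext =
     balx A thext ` buses A \<union> (\<lambda>n x. - balx A thext n x) ` buses A
     \<union> (\<lambda>g x. pmin A g - x (Inl g)) ` gens A \<union> (\<lambda>g x. x (Inl g) - pmax A g) ` gens A
     \<union> (\<lambda>l x. - flim A l - (x (Inr (fst l)) - x (Inr (snd l))) / react A l) ` lines A
     \<union> (\<lambda>l x. (x (Inr (fst l)) - x (Inr (snd l))) / react A l - flim A l) ` lines A
     \<union> (if is_area1 A then {\<lambda>x. x (Inr (bus1 A)), \<lambda>x. - x (Inr (bus1 A))} else {})"

lemma affS_uminus:
  assumes "affS S f"
  shows "affS S (\<lambda>x. - f x)"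
  using affS_diff[OF affS_const assms, of 0] by simp

lemma csf_finite: "well_formed A \<Longrightarrow> finite (csf A thext)"
  unfolding csf_def well_formed_def by auto

lemma csf_aff:
  assumes wf: "well_formed A"
  shows "\<forall>f\<in>csf A thext. affS (Inl ` gens A \<union> Inr ` buses A) f"
proof -
  define S where "S = Inl ` gens A \<union> Inr ` buses A"
  have finS: "finite S" using wf unfolding S_def well_formed_def by auto
  have cb: "affS S (\<lambda>x. x (Inr m))" if "m \<in> buses A" for m
    using affS_coord[OF finS] that unfolding S_def by auto
  have cg: "affS S (\<lambda>x. x (Inl g))" if "g \<in> gens A" for g
    using affS_coord[OF finS] that unfolding S_def by auto
  have bal: "affS S (balx A thext n)" for n
  proof -
    have a1: "affS S (\<lambda>x. \<Sum>m\<in>buses A. admittance A n m * x (Inr m))"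
      using wf unfolding well_formed_def
      by (intro affS_sum[of _ S "\<lambda>m x. admittance A n m * x (Inr m)"]) (auto intro: affS_scale cb)
    have a2: "affS S (\<lambda>x. \<Sum>l\<in>{l\<in>ties A. fst l = n}. (x (Inr (fst l)) - thext (snd l)) / tie_react A l)"
    proof (intro affS_sum[of _ S "\<lambda>l x. (x (Inr (fst l)) - thext (snd l)) / tie_react A l"] ballI)
      show "finite {l\<in>ties A. fst l = n}" using wf unfolding well_formed_def by auto
      fix l assume "l \<in> {l\<in>ties A. fst l = n}"
      then have "fst l \<in> buses A" using wf unfolding well_formed_def by auto
      then show "affS S (\<lambda>x. (x (Inr (fst l)) - thext (snd l)) / tie_react A l)"
        by (intro affS_div affS_diff cb affS_const)
    qed
    have a3: "affS S (\<lambda>x. \<Sum>g\<in>{g\<in>gens A. gbus A g = n}. x (Inl g))"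
      using wf unfolding well_formed_def
      by (intro affS_sum[of _ S "\<lambda>g x. x (Inl g)"]) (auto intro: cg)
    have "affS S (\<lambda>x. (\<Sum>m\<in>buses A. admittance A n m * x (Inr m))
     + (\<Sum>l\<in>{l\<in>ties A. fst l = n}. (x (Inr (fst l)) - thext (snd l)) / tie_react A l)
     - (\<Sum>g\<in>{g\<in>gens A. gbus A g = n}. x (Inl g)) + load A n)"
      by (intro affS_add affS_diff a1 a2 a3 affS_const)
    then show ?thesis unfolding balx_def[abs_def] .
  qed
  have lin: "fst l \<in> buses A \<and> snd l \<in> buses A" if "l \<in> lines A" for l
    using wf that unfolding well_formed_def by auto
  have b1: "bus1 A \<in> buses A" using wf unfolding well_formed_def by auto
  show ?thesis
    unfolding csf_def S_def[symmetric]
    using bal lin b1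
    by (auto intro!: affS_diff affS_const cg cb affS_div affS_add affS_uminus
        split: if_splits)
qed

lemma feas_csf:
  assumes fe: "feasible A thext P \<theta> T"
  shows "\<forall>f\<in>csf A thext. f (case_sum P \<theta>) \<le> 0"
    and "\<forall>l\<in>ties A. T l = Tx A thext (case_sum P \<theta>) l"
proof -
  note F = fe[unfolded feasible_def]
  show Tl: "\<forall>l\<in>ties A. T l = Tx A thext (case_sum P \<theta>) l"
    using F unfolding Tx_def by auto
  have bal0: "balx A thext n (case_sum P \<theta>) = 0" if n: "n \<in> buses A" for n
  proof -
    have "(\<Sum>l\<in>{l\<in>ties A. fst l = n}. T l)
        = (\<Sum>l\<in>{l\<in>ties A. fst l = n}. (case_sum P \<theta> (Inr (fst l)) - thext (snd l)) / tie_react A l)"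
      using Tl unfolding Tx_def by (intro sum.cong) auto
    then show ?thesis using F n unfolding balx_def by auto
  qed
  show "\<forall>f\<in>csf A thext. f (case_sum P \<theta>) \<le> 0"
    unfolding csf_def using F bal0 by (auto split: if_splits)
qed

lemma csf_feas:
  assumes c: "\<forall>f\<in>csf A thext. f x \<le> 0"
  shows "feasible A thext (\<lambda>g. x (Inl g)) (\<lambda>n. x (Inr n)) (Tx A thext x)"
proof -
  have mem: "f x \<le> 0" if "f \<in> csf A thext" for f using c that by blast
  have bal: "balx A thext n x = 0" if "n \<in> buses A" for n
  proof -
    have "balx A thext n x \<le> 0" "- balx A thext n x \<le> 0"
      by (rule mem, unfold csf_def, use that in blast)+
    then show ?thesis by linarith
  qed
  have r1: "x (Inr (bus1 A)) = 0" if "is_area1 A"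
  proof -
    have "x (Inr (bus1 A)) \<le> 0" "- x (Inr (bus1 A)) \<le> 0"
      by (rule mem[of "\<lambda>x. x (Inr (bus1 A))", simplified] mem[of "\<lambda>x. - x (Inr (bus1 A))", simplified], unfold csf_def, use that in auto)+
    then show ?thesis by linarith
  qed
  have ln: "- flim A l \<le> (x (Inr (fst l)) - x (Inr (snd l))) / react A l \<and>
            (x (Inr (fst l)) - x (Inr (snd l))) / react A l \<le> flim A l" if "l \<in> lines A" for l
  proof -
    have "- flim A l - (x (Inr (fst l)) - x (Inr (snd l))) / react A l \<le> 0"
         "(x (Inr (fst l)) - x (Inr (snd l))) / react A l - flim A l \<le> 0"
      by (rule mem, unfold csf_def, use that in blast)+
    then show ?thesis by linarith
  qed
  have pg: "pmin A g \<le> x (Inl g) \<and> x (Inl g) \<le> pmax A g" if "g \<in> gens A" for g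
  proof -
    have "pmin A g - x (Inl g) \<le> 0" "x (Inl g) - pmax A g \<le> 0"
      by (rule mem, unfold csf_def, use that in blast)+
    then show ?thesis by linarith
  qed
  have b: "\<forall>n\<in>buses A. (\<Sum>m\<in>buses A. admittance A n m * x (Inr m)) + (\<Sum>l\<in>{l \<in> ties A. fst l = n}. Tx A thext x l) =
         (\<Sum>g\<in>{g \<in> gens A. gbus A g = n}. x (Inl g)) - load A n"
  proof
    fix n assume "n \<in> buses A"
    then show "(\<Sum>m\<in>buses A. admittance A n m * x (Inr m)) + (\<Sum>l\<in>{l \<in> ties A. fst l = n}. Tx A thext x l) =
         (\<Sum>g\<in>{g \<in> gens A. gbus A g = n}. x (Inl g)) - load A n"
      using bal[of n] unfolding balx_def Tx_def by linarith
  qed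
  have l2: "\<forall>(i, j)\<in>lines A. - flim A (i, j) \<le> (x (Inr i) - x (Inr j)) / react A (i, j) \<and>
          (x (Inr i) - x (Inr j)) / react A (i, j) \<le> flim A (i, j)"
    using ln by fastforce
  have t2: "\<forall>(i, j)\<in>ties A. Tx A thext x (i, j) = (x (Inr i) - thext j) / tie_react A (i, j)"
    unfolding Tx_def by auto
  show ?thesis unfolding feasible_def
    using b pg l2 t2 r1 by blast
qed


theorem proposition2:
  fixes A :: "('b, 'g) area"
    and alpha thext :: "'b \<Rightarrow> real"
    and mu :: "'b \<times> 'b \<Rightarrow> real"
  assumes wf: "well_formed A"
    and mu_nonneg: "\<forall>l\<in>ties A. mu l \<ge> 0"
    and feas0: "\<exists>P \<theta> T. feasible A thext P \<theta> T \<and> (\<forall>l\<in>ties A. T l = 0)"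
  shows "\<forall>e\<in>ties A. \<exists>mubar > 0. \<forall>m \<ge> mubar. \<forall>P \<theta> T.
           optimal A alpha thext (mu(e := m)) P \<theta> T \<longrightarrow> T e = 0"
proof (intro ballI)
  fix e assume e: "e \<in> ties A"
  define S where "S = Inl ` gens A \<union> Inr ` buses A"
  define he where "he = (\<lambda>x::'g + 'b \<Rightarrow> real. Tx A thext x e)"
  define cs where "cs = csf A thext \<union> {he, \<lambda>x. - he x}"
  have wfd: "finite (buses A)" "finite (gens A)" "finite (ties A)"
    "\<forall>l\<in>ties A. fst l \<in> buses A" "\<forall>l\<in>ties A. tie_react A l > 0"
    "\<forall>g\<in>gens A. strictly_convex_on UNIV (cost A g)"
    using wf unfolding well_formed_def by auto
  have finS: "finite S" unfolding S_def using wfd by auto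
  have fincs: "finite cs" unfolding cs_def using csf_finite[OF wf] by auto
  have ehe: "fst e \<in> buses A" using wfd e by auto
  have affhe: "affS S he"
    unfolding he_def Tx_def[abs_def]
    by (intro affS_div affS_diff affS_const affS_coord finS) (use ehe in \<open>auto simp: S_def\<close>)
  have affcs: "\<forall>f\<in>cs. affS S f"
    unfolding cs_def using csf_aff[OF wf] affhe affS_uminus[OF affhe] unfolding S_def by auto
  obtain P0 \<theta>0 T0 where fe0: "feasible A thext P0 \<theta>0 T0" and T00: "\<forall>l\<in>ties A. T0 l = 0"
    using feas0 by blast
  have feascs: "\<exists>y. \<forall>f\<in>cs. f y \<le> 0"
  proof (intro exI ballI)
    fix f assume "f \<in> cs"
    moreover have "he (case_sum P0 \<theta>0) = 0"
      using feas_csf(2)[OF fe0] T00 e unfolding he_def by auto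
    ultimately show "f (case_sum P0 \<theta>0) \<le> 0"
      using feas_csf(1)[OF fe0] unfolding cs_def by auto
  qed
  obtain C where C0: "C \<ge> 0" and C: "\<forall>x \<epsilon>. \<epsilon> \<ge> 0 \<longrightarrow> (\<forall>f\<in>cs. f x \<le> \<epsilon>) \<longrightarrow>
       (\<exists>y. (\<forall>f\<in>cs. f y \<le> 0) \<and> (\<forall>j\<in>S. \<bar>x j - y j\<bar> \<le> C * \<epsilon>))"
    using hoffman[OF finS fincs affcs feascs] by blast
  define Lg where "Lg g = \<bar>cost A g (pmax A g + 1) - cost A g (pmax A g)\<bar>
      + \<bar>cost A g (pmin A g) - cost A g (pmin A g - 1)\<bar>" for g
  define L where "L = (\<Sum>g\<in>gens A. Lg g) * C + (\<Sum>l\<in>ties A. \<bar>alpha (snd l)\<bar> / tie_react A l) * C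
      + (\<Sum>l\<in>ties A. \<bar>mu l\<bar> / tie_react A l) * C"
  have L0: "L \<ge> 0"
    unfolding L_def using C0 wfd(5)
    by (intro add_nonneg_nonneg mult_nonneg_nonneg sum_nonneg) (auto simp: Lg_def)
  show "\<exists>mubar > 0. \<forall>m \<ge> mubar. \<forall>P \<theta> T. optimal A alpha thext (mu(e := m)) P \<theta> T \<longrightarrow> T e = 0"
  proof (intro exI[of _ "2 * L + 1"] conjI allI impI)
    show "2 * L + 1 > 0" using L0 by simp
    fix m P \<theta> T
    assume m: "2 * L + 1 \<le> m" and opt: "optimal A alpha thext (mu(e := m)) P \<theta> T"
    define mu' where "mu' = mu(e := m)"
    have fe: "feasible A thext P \<theta> T" using opt unfolding optimal_def by blast
    define xs where "xs = case_sum P \<theta>"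
    have Tl: "\<forall>l\<in>ties A. T l = Tx A thext xs l" using feas_csf(2)[OF fe] unfolding xs_def .
    define t where "t = T e"
    have t_eq: "he xs = t" unfolding he_def t_def using Tl e by auto
    have viol: "\<forall>f\<in>cs. f xs \<le> \<bar>t\<bar>"
    proof
      fix f assume "f \<in> cs"
      then consider "f \<in> csf A thext" | "f = he" | "f = (\<lambda>x. - he x)" unfolding cs_def by auto
      then show "f xs \<le> \<bar>t\<bar>"
      proof cases
        case 1
        then have "f xs \<le> 0" using feas_csf(1)[OF fe] unfolding xs_def by auto
        then show ?thesis by linarith
      qed (use t_eq in auto)
    qed
    obtain y where yf: "\<forall>f\<in>cs. f y \<le> 0" and yd: "\<forall>j\<in>S. \<bar>xs j - y j\<bar> \<le> C * \<bar>t\<bar>"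
      using mp[OF mp[OF spec[OF spec[OF C, of xs], of "\<bar>t\<bar>"] abs_ge_zero] viol] by blast
    define P' where "P' = (\<lambda>g. y (Inl g))"
    define \<theta>' where "\<theta>' = (\<lambda>n. y (Inr n))"
    define T' where "T' = Tx A thext y"
    have fe': "feasible A thext P' \<theta>' T'"
      unfolding P'_def \<theta>'_def T'_def using yf unfolding cs_def by (intro csf_feas) auto
    have T'e: "T' e = 0"
    proof -
      have "he y \<le> 0" "- he y \<le> 0" using yf unfolding cs_def by auto
      then show ?thesis unfolding T'_def he_def by linarith
    qed
    have optle: "objective A alpha mu' P T \<le> objective A alpha mu' P' T'"
      using opt fe' unfolding optimal_def mu'_def by blast
    have dP: "\<bar>P' g - P g\<bar> \<le> C * \<bar>t\<bar>" if "g \<in> gens A" for g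
      using yd that unfolding S_def P'_def xs_def by (force simp: abs_minus_commute)
    have dT: "\<bar>T' l - T l\<bar> \<le> C * \<bar>t\<bar> / tie_react A l" if l: "l \<in> ties A" for l
    proof -
      have tr: "tie_react A l > 0" using wfd l by auto
      have "T' l - T l = (y (Inr (fst l)) - xs (Inr (fst l))) / tie_react A l"
        using Tl l unfolding T'_def Tx_def by (simp add: diff_divide_distrib)
      moreover have "\<bar>y (Inr (fst l)) - xs (Inr (fst l))\<bar> \<le> C * \<bar>t\<bar>"
        using yd wfd l unfolding S_def by (force simp: abs_minus_commute)
      ultimately show ?thesis using tr by (simp add: abs_div divide_right_mono)
    qed
    have h1: "(\<Sum>g\<in>gens A. cost A g (P' g)) - (\<Sum>g\<in>gens A. cost A g (P g)) \<le> (\<Sum>g\<in>gens A. Lg g) * (C * \<bar>t\<bar>)"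
    proof -
      have "(\<Sum>g\<in>gens A. cost A g (P' g)) - (\<Sum>g\<in>gens A. cost A g (P g))
          = (\<Sum>g\<in>gens A. cost A g (P' g) - cost A g (P g))" by (simp add: sum_subtractf)
      also have "\<dots> \<le> (\<Sum>g\<in>gens A. Lg g * (C * \<bar>t\<bar>))"
      proof (rule sum_mono)
        fix g assume g: "g \<in> gens A"
        have r1: "pmin A g \<le> P g \<and> P g \<le> pmax A g" using fe g unfolding feasible_def by auto
        have r2: "pmin A g \<le> P' g \<and> P' g \<le> pmax A g" using fe' g unfolding feasible_def by auto
        have "cost A g (P' g) - cost A g (P g) \<le> Lg g * \<bar>P' g - P g\<bar>"
          unfolding Lg_def using convex_lip[of "cost A g" "pmin A g" "P g" "pmax A g" "P' g"] wfd(6) g r1 r2 by auto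
        also have "\<dots> \<le> Lg g * (C * \<bar>t\<bar>)" using dP[OF g] by (intro mult_left_mono) (auto simp: Lg_def)
        finally show "cost A g (P' g) - cost A g (P g) \<le> Lg g * (C * \<bar>t\<bar>)" .
      qed
      finally show ?thesis by (simp add: sum_distrib_right)
    qed
    have sa: "(\<Sum>(i, j)\<in>ties A. alpha j * Q (i, j)) = (\<Sum>l\<in>ties A. alpha (snd l) * Q l)" for Q :: "'b \<times> 'b \<Rightarrow> real"
      by (simp add: case_prod_beta)
    have h2: "(\<Sum>l\<in>ties A. alpha (snd l) * T l) - (\<Sum>l\<in>ties A. alpha (snd l) * T' l)
        \<le> (\<Sum>l\<in>ties A. \<bar>alpha (snd l)\<bar> / tie_react A l) * (C * \<bar>t\<bar>)"
    proof -
      have "(\<Sum>l\<in>ties A. alpha (snd l) * T l) - (\<Sum>l\<in>ties A. alpha (snd l) * T' l)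
          = (\<Sum>l\<in>ties A. alpha (snd l) * (T l - T' l))" by (simp add: sum_subtractf algebra_simps)
      also have "\<dots> \<le> (\<Sum>l\<in>ties A. \<bar>alpha (snd l)\<bar> / tie_react A l * (C * \<bar>t\<bar>))"
      proof (rule sum_mono)
        fix l assume l: "l \<in> ties A"
        have "alpha (snd l) * (T l - T' l) \<le> \<bar>alpha (snd l)\<bar> * \<bar>T' l - T l\<bar>"
          by (metis abs_ge_self abs_minus_commute abs_mult)
        also have "\<dots> \<le> \<bar>alpha (snd l)\<bar> * (C * \<bar>t\<bar> / tie_react A l)"
          using dT[OF l] by (intro mult_left_mono) auto
        finally show "alpha (snd l) * (T l - T' l) \<le> \<bar>alpha (snd l)\<bar> / tie_react A l * (C * \<bar>t\<bar>)"
          by simp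
      qed
      finally show ?thesis by (simp add: sum_distrib_right)
    qed
    have h3: "(\<Sum>l\<in>ties A. mu' l / 2 * (\<bar>T' l\<bar> - tie_cap A l)) - (\<Sum>l\<in>ties A. mu' l / 2 * (\<bar>T l\<bar> - tie_cap A l))
        \<le> (\<Sum>l\<in>ties A. \<bar>mu l\<bar> / tie_react A l) * (C * \<bar>t\<bar>) - m / 2 * \<bar>t\<bar>"
    proof -
      define G where "G l = mu' l / 2 * (\<bar>T' l\<bar> - \<bar>T l\<bar>)" for l
      define H where "H l = \<bar>mu l\<bar> / tie_react A l * (C * \<bar>t\<bar>)" for l
      have "(\<Sum>l\<in>ties A. mu' l / 2 * (\<bar>T' l\<bar> - tie_cap A l)) - (\<Sum>l\<in>ties A. mu' l / 2 * (\<bar>T l\<bar> - tie_cap A l))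
          = (\<Sum>l\<in>ties A. G l)" unfolding G_def by (simp add: sum_subtractf algebra_simps)
      also have "\<dots> = G e + (\<Sum>l\<in>ties A - {e}. G l)" using e wfd(3) by (simp add: sum.remove)
      also have "G e = - (m / 2 * \<bar>t\<bar>)" unfolding G_def mu'_def t_def using T'e by simp
      also have "(\<Sum>l\<in>ties A - {e}. G l) \<le> (\<Sum>l\<in>ties A - {e}. H l)"
      proof (rule sum_mono)
        fix l assume l: "l \<in> ties A - {e}"
        have mu0: "mu l \<ge> 0" using mu_nonneg l by auto
        have tr: "tie_react A l > 0" using wfd l by auto
        have "G l = mu l / 2 * (\<bar>T' l\<bar> - \<bar>T l\<bar>)" unfolding G_def mu'_def using l by auto
        also have "\<dots> \<le> mu l / 2 * \<bar>T' l - T l\<bar>" using mu0 by (intro mult_left_mono) auto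
        also have "\<dots> \<le> mu l / 2 * (C * \<bar>t\<bar> / tie_react A l)" using dT l mu0 by (intro mult_left_mono) auto
        also have "\<dots> \<le> mu l * (C * \<bar>t\<bar> / tie_react A l)"
          using mu0 C0 tr by (intro mult_right_mono) auto
        also have "\<dots> = H l" unfolding H_def using mu0 by simp
        finally show "G l \<le> H l" .
      qed
      also have "(\<Sum>l\<in>ties A - {e}. H l) \<le> (\<Sum>l\<in>ties A. H l)"
        using wfd(3) wfd(5) C0 unfolding H_def by (intro sum_mono2) auto
      finally show ?thesis unfolding H_def by (simp add: sum_distrib_right)
    qed
    have "0 \<le> objective A alpha mu' P' T' - objective A alpha mu' P T" using optle by simp
    also have "\<dots> = ((\<Sum>g\<in>gens A. cost A g (P' g)) - (\<Sum>g\<in>gens A. cost A g (P g)))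
        + ((\<Sum>l\<in>ties A. alpha (snd l) * T l) - (\<Sum>l\<in>ties A. alpha (snd l) * T' l))
        + ((\<Sum>l\<in>ties A. mu' l / 2 * (\<bar>T' l\<bar> - tie_cap A l)) - (\<Sum>l\<in>ties A. mu' l / 2 * (\<bar>T l\<bar> - tie_cap A l)))"
      unfolding objective_def sa by simp
    also have "\<dots> \<le> L * \<bar>t\<bar> - m / 2 * \<bar>t\<bar>"
      using h1 h2 h3 unfolding L_def by (simp add: algebra_simps)
    finally have "m / 2 * \<bar>t\<bar> \<le> L * \<bar>t\<bar>" by simp
    moreover have "(L + 1/2) * \<bar>t\<bar> \<le> m / 2 * \<bar>t\<bar>" using m by (intro mult_right_mono) auto
    ultimately have "\<bar>t\<bar> \<le> 0" by (simp add: algebra_simps)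
    then show "T e = 0" unfolding t_def by simp
  qed
qed

end
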